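(* Let $T$ be Takagi's function, $T(x)=\sum_{n=1}^\infty 2^{-n}\phi^{(n)}(x)$ on $[0,1]$, where $\phi(x)=2x$ for $0\le x\le1/2$, $\phi(x)=2-2x$ for $1/2\le x\le 1$, and $\phi^{(n)}$ is the $n$-fold composition. Let $x\in(0,1)$ be non-dyadic and write $x=\sum_{n=1}^\infty 2^{-a_n}$, $1-x=\sum_{n=1}^\infty 2^{-b_n}$ with $\{a_n\},\{b_n\}$ strictly increasing sequences of positive integers. Then: (i) $T'(x)=+\infty$ if and only if $a_{n+1}-2a_n+2n-\log_2(a_{n+1}-a_n)\to-\infty$; (ii) $T'(x)=-\infty$ if and only if $b_{n+1}-2b_n+2n-\log_2(b_{n+1}-b_n)\to-\infty$.
   Context: $T'(x)=+\infty$ (resp. $-\infty$) means $\lim_{h\to0}\frac{T(x+h)-T(x)}{h}=+\infty$ (resp. $-\infty$), the limit being two-sided. A dyadic point is one of the form $k/2^m$ with integers $k,m$. *)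

theory Defs
  imports "HOL-Analysis.Analysis"
begin

definition tent :: "real \<Rightarrow> real" where
  "tent x = (if x \<le> 1/2 then 2 * x else 2 - 2 * x)"

definition takagi :: "real \<Rightarrow> real" where
  "takagi x = (\<Sum>n. (tent ^^ (Suc n)) x / 2 ^ (Suc n))"

definition dyadic :: "real \<Rightarrow> bool" where
  "dyadic x \<longleftrightarrow> (\<exists>k::int. \<exists>m::nat. x = real_of_int k / 2 ^ m)"

end

theory Submission
  imports Defs
begin


lemma tent_range: "0 \<le> y \<Longrightarrow> y \<le> 1 \<Longrightarrow> 0 \<le> tent y \<and> tent y \<le> 1"
  by (auto simp: tent_def)

lemma funpow_tent_range: "0 \<le> y \<Longrightarrow> y \<le> 1 \<Longrightarrow> 0 \<le> (tent^^n) y \<and> (tent^^n) y \<le> 1"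
  by (induction n) (auto simp: tent_range)

lemma tak_summable:
  assumes "0 \<le> y" "y \<le> 1"
  shows "summable (\<lambda>n. (tent ^^ (Suc n)) y / 2 ^ (Suc n))"
proof (rule summable_comparison_test)
  show "\<exists>N. \<forall>n\<ge>N. norm ((tent ^^ (Suc n)) y / 2 ^ (Suc n)) \<le> (1/2)^(Suc n)"
  proof (intro exI allI impI)
    fix n :: nat
    show "norm ((tent ^^ (Suc n)) y / 2 ^ (Suc n)) \<le> (1/2)^(Suc n)"
      using funpow_tent_range[OF assms, of "Suc n"] by (auto simp: power_divide intro!: divide_right_mono)
  qed
  show "summable (\<lambda>n. (1/2::real)^(Suc n))"
    by (simp add: summable_geometric)
qed

lemma tak_eq:
  assumes "0 \<le> y" "y \<le> 1"
  shows "takagi y = tent y / 2 + takagi (tent y) / 2"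
proof -
  let ?f = "\<lambda>n. (tent ^^ (Suc n)) y / 2 ^ (Suc n)"
  let ?g = "\<lambda>n. (tent ^^ (Suc n)) (tent y) / 2 ^ (Suc n)"
  have s: "summable ?f" by (rule tak_summable[OF assms])
  have s2: "summable ?g" using tak_summable tent_range[OF assms] by blast
  have "(\<Sum>n. ?f (Suc n)) = suminf ?f - ?f 0" by (rule suminf_split_head[OF s])
  moreover have "(\<lambda>n. ?f (Suc n)) = (\<lambda>n. ?g n / 2)"
    by (rule ext) (simp only: funpow_Suc_right comp_def, simp)
  moreover have "(\<Sum>n. ?g n / 2) = suminf ?g / 2" by (rule suminf_divide[OF s2])
  ultimately show ?thesis by (simp add: takagi_def)
qed

lemma tent_sym: "tent (1 - y) = tent y" by (auto simp: tent_def)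

lemma tak_sym: "takagi (1 - y) = takagi y"
proof -
  have "(tent ^^ (Suc n)) (1 - y) = (tent ^^ (Suc n)) y" for n
    by (simp only: funpow_Suc_right comp_def tent_sym)
  thus ?thesis by (simp add: takagi_def)
qed

lemma tak_bounds:
  assumes "0 \<le> y" "y \<le> 1"
  shows "0 \<le> takagi y \<and> takagi y \<le> 1"
proof -
  let ?f = "\<lambda>n. (tent ^^ (Suc n)) y / 2 ^ (Suc n)"
  have s: "summable ?f" by (rule tak_summable[OF assms])
  have "0 \<le> suminf ?f"
  proof (intro suminf_nonneg[OF s])
    fix n show "0 \<le> ?f n" using funpow_tent_range[OF assms, of "Suc n"] by simp
  qed
  moreover have "suminf ?f \<le> (\<Sum>n. (1/2::real)^(Suc n))"
  proof (intro suminf_le[OF _ s])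
    fix n show "?f n \<le> (1/2::real)^(Suc n)"
      using funpow_tent_range[OF assms, of "Suc n"] by (auto simp: power_divide intro!: divide_right_mono)
    show "summable (\<lambda>n. (1/2::real)^(Suc n))" by (simp add: summable_geometric)
  qed
  moreover have "(\<Sum>n. (1/2::real)^(Suc n)) = 1"
    using suminf_geometric[of "1/2::real"] suminf_divide[OF summable_geometric[of "1/2::real"], of 2] by simp
  ultimately show ?thesis by (simp add: takagi_def)
qed

lemma tak_half: "0 \<le> z \<Longrightarrow> z \<le> 1 \<Longrightarrow> takagi (z/2) = z/2 + takagi z / 2"
  using tak_eq[of "z/2"] by (simp add: tent_def)

lemma tak_half2: "0 \<le> z \<Longrightarrow> z \<le> 1 \<Longrightarrow> takagi ((1+z)/2) = (1-z)/2 + takagi z / 2"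
proof -
  assume h: "0 \<le> z" "z \<le> 1"
  have "tent ((1+z)/2) = 1 - z" using h by (auto simp: tent_def field_simps)
  thus ?thesis using tak_eq[of "(1+z)/2"] h tak_sym[of z] by simp
qed

lemma tak_zero: "takagi 0 = 0"
  using tak_half[of 0] by simp

lemma tak_one: "takagi 1 = 0"
  using tak_sym[of 0] tak_zero by simp

lemma tak_scale:
  assumes "0 \<le> z" "z \<le> 1"
  shows "takagi (z * (1/2)^p) = real p * z * (1/2)^p + takagi z * (1/2)^p"
proof (induction p)
  case 0 then show ?case by simp
next
  case (Suc p)
  have r: "0 \<le> z * (1/2)^p \<and> z * (1/2)^p \<le> 1" using assms
    by (auto intro: mult_le_one simp: power_le_one)
  have "takagi (z * (1/2)^Suc p) = takagi ((z * (1/2)^p)/2)" by simp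
  also have "\<dots> = z * (1/2)^p / 2 + takagi (z * (1/2)^p) / 2"
    using tak_half r by blast
  also have "\<dots> = real (Suc p) * z * (1/2)^Suc p + takagi z * (1/2)^Suc p"
    using Suc by (simp add: field_simps)
  finally show ?case .
qed


locale tak =
  fixes x :: real and a :: "nat \<Rightarrow> nat"
  assumes x0: "0 < x" and x1: "x < 1" and nd: "\<not> dyadic x"
    and sm: "strict_mono a" and a1: "\<forall>k. a k \<ge> 1" and sx: "(\<lambda>k. (1/2::real) ^ a k) sums x"
begin

definition N :: "nat \<Rightarrow> nat" where "N i = (LEAST k. i < a k)"
definition c :: "nat \<Rightarrow> real" where "c i = (\<Sum>k<N i. (1/2::real) ^ a k)"
definition D :: "nat \<Rightarrow> real" where "D i = real i - 2 * real (N i)"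

lemma a_ge: "n \<le> a n" using sm by (rule seq_suble)

lemma a_shift: "a m + n \<le> a (m + n)"
proof (induction n)
  case 0 then show ?case by simp
next
  case (Suc n)
  have "a (m + n) < a (m + Suc n)" using sm by (simp add: strict_mono_def)
  then show ?case using Suc by simp
qed

lemma N1: "i < a (N i)"
proof -
  have "i < a (Suc i)" using a_ge[of "Suc i"] by simp
  thus ?thesis unfolding N_def by (rule LeastI)
qed

lemma N2: "k < N i \<Longrightarrow> a k \<le> i"
  unfolding N_def using not_less_Least by fastforce

lemma N3: "a k \<le> i \<Longrightarrow> k < N i"
proof (rule ccontr)
  assume h: "a k \<le> i" "\<not> k < N i"
  then have "a (N i) \<le> a k" using sm by (simp add: strict_mono_less_eq)
  thus False using N1[of i] h by simp
qed

lemma N_char: "(\<And>k. k < n \<Longrightarrow> a k \<le> i) \<Longrightarrow> i < a n \<Longrightarrow> N i = n"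
  unfolding N_def
  by (rule Least_equality) (auto simp: not_less[symmetric])

lemma N_a: "N (a k) = Suc k"
proof (rule N_char)
  fix j assume "j < Suc k" then show "a j \<le> a k" using sm by (simp add: strict_mono_less_eq)
next
  show "a k < a (Suc k)" using sm by (simp add: strict_mono_def)
qed

lemma N_a_pred: "N (a k - 1) = k"
proof (rule N_char)
  fix j assume "j < k" then have "a j < a k" using sm by (simp add: strict_mono_def)
  then show "a j \<le> a k - 1" by simp
next
  show "a k - 1 < a k" using a1 by (simp add: Suc_le_eq)
qed

lemma N0: "N 0 = 0"
  by (rule N_char) (use a1 in \<open>auto simp: Suc_le_eq\<close>)

lemma N_Suc_in: "Suc i = a k \<Longrightarrow> N (Suc i) = Suc (N i) \<and> N i = k"
proof -
  assume k: "Suc i = a k"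
  have "i = a k - 1" using k by simp
  thus ?thesis using N_a[of k] N_a_pred[of k] k by simp
qed

lemma N_Suc_out: "Suc i \<notin> range a \<Longrightarrow> N (Suc i) = N i"
proof (rule N_char)
  assume h: "Suc i \<notin> range a"
  fix k assume "k < N i" then show "a k \<le> Suc i" using N2 by fastforce
next
  assume h: "Suc i \<notin> range a"
  have "a (N i) \<noteq> Suc i" using h by (metis rangeI)
  then show "Suc i < a (N i)" using N1[of i] by simp
qed

lemma c0: "c 0 = 0" by (simp add: c_def N0)
lemma D0: "D 0 = 0" by (simp add: D_def N0)

lemma c_Suc_in: "Suc i \<in> range a \<Longrightarrow> c (Suc i) = c i + (1/2)^(Suc i)"
proof -
  assume "Suc i \<in> range a"
  then obtain k where k: "Suc i = a k" by auto
  show ?thesis using N_Suc_in[OF k] k by (simp add: c_def)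
qed

lemma D_Suc_in: "Suc i \<in> range a \<Longrightarrow> D (Suc i) = D i - 1"
proof -
  assume "Suc i \<in> range a"
  then obtain k where k: "Suc i = a k" by auto
  show ?thesis using N_Suc_in[OF k] by (simp add: D_def)
qed

lemma c_Suc_out: "Suc i \<notin> range a \<Longrightarrow> c (Suc i) = c i"
  using N_Suc_out by (simp add: c_def)

lemma D_Suc_out: "Suc i \<notin> range a \<Longrightarrow> D (Suc i) = D i + 1"
  using N_Suc_out by (simp add: D_def)

lemma D_a: "D (a k) = real (a k) - 2 * (real k + 1)"
  by (simp add: D_def N_a)

lemma c_dyadic: "\<exists>m::int. c i = of_int m / 2 ^ i"
proof (induction i)
  case 0 then show ?case by (auto simp: c0)
next
  case (Suc i)
  then obtain m where m: "c i = of_int m / 2 ^ i" by blast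
  show ?case
  proof (cases "Suc i \<in> range a")
    case True
    show ?thesis
      by (rule exI[of _ "2*m+1"]) (simp add: c_Suc_in[OF True] m field_simps power_divide)
  next
    case False
    show ?thesis
      by (rule exI[of _ "2*m"]) (simp add: c_Suc_out[OF False] m field_simps)
  qed
qed

lemma tail: "x - c i = (\<Sum>n. (1/2::real) ^ a (n + N i))"
proof -
  have s: "summable (\<lambda>k. (1/2::real) ^ a k)" using sx by (rule sums_summable)
  have "x = (\<Sum>n. (1/2::real) ^ a (n + N i)) + (\<Sum>k<N i. (1/2::real) ^ a k)"
    using suminf_split_initial_segment[OF s, of "N i"] sums_unique[OF sx] by simp
  thus ?thesis by (simp add: c_def)
qed

lemma tail_bounds: "(1/2::real) ^ a (N i) \<le> x - c i \<and> x - c i \<le> 2 * (1/2) ^ a (N i)"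
proof -
  let ?g = "\<lambda>n. (1/2::real) ^ a (n + N i)"
  have s: "summable (\<lambda>k. (1/2::real) ^ a k)" using sx by (rule sums_summable)
  have sg: "summable ?g" using summable_iff_shift[of "\<lambda>k. (1/2::real) ^ a k" "N i"] s by simp
  have le: "?g n \<le> (1/2) ^ a (N i) * (1/2) ^ n" for n
  proof -
    have "a (N i) + n \<le> a (n + N i)" using a_shift[of "N i" n] by (simp add: add.commute)
    hence "(1/2::real) ^ a (n + N i) \<le> (1/2) ^ (a (N i) + n)" by (intro power_decreasing) auto
    thus ?thesis by (simp add: power_add)
  qed
  have "suminf ?g \<le> (\<Sum>n. (1/2) ^ a (N i) * (1/2::real) ^ n)"
    by (rule suminf_le[OF le sg]) (intro summable_mult summable_geometric, simp)
  also have "\<dots> = 2 * (1/2) ^ a (N i)"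
    using suminf_mult[OF summable_geometric[of "1/2::real"], of "(1/2) ^ a (N i)"] suminf_geometric[of "1/2::real"]
    by simp
  finally have u: "suminf ?g \<le> 2 * (1/2) ^ a (N i)" .
  have "sum ?g {0} \<le> suminf ?g" by (rule sum_le_suminf[OF sg]) auto
  then have l: "(1/2) ^ a (N i) \<le> suminf ?g" by simp
  show ?thesis using u l tail[of i] by simp
qed

lemma tail_le: "x - c i \<le> (1/2) ^ i"
proof -
  have "Suc i \<le> a (N i)" using N1[of i] by simp
  hence "(1/2::real) ^ a (N i) \<le> (1/2) ^ Suc i" by (intro power_decreasing) auto
  thus ?thesis using tail_bounds[of i] by simp
qed

lemma x_pos: "0 < x - c i"
proof -
  have "(0::real) < (1/2) ^ a (N i)" by simp
  thus ?thesis using tail_bounds[of i] by linarith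
qed

lemma x_lt: "x - c i < (1/2) ^ i"
proof -
  obtain m where m: "c i = of_int m / 2 ^ i" using c_dyadic by blast
  have "x \<noteq> c i + (1/2)^i"
  proof
    assume "x = c i + (1/2)^i"
    hence "x = real_of_int (m + 1) / 2 ^ i" using m by (simp add: field_simps power_divide)
    thus False using nd unfolding dyadic_def by blast
  qed
  thus ?thesis using tail_le[of i] by simp
qed

lemma SA:
  assumes "0 \<le> z" "z \<le> 1"
  shows "takagi (c i + z * (1/2)^i) = takagi (c i) + D i * z * (1/2)^i + takagi z * (1/2)^i"
  using assms
proof (induction i arbitrary: z)
  case 0 then show ?case by (simp add: c0 D0 tak_zero)
next
  case (Suc i)
  show ?case
  proof (cases "Suc i \<in> range a")
    case True
    have r: "0 \<le> (1+z)/2" "(1+z)/2 \<le> 1" using Suc.prems by auto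
    have e1: "c (Suc i) + z * (1/2)^Suc i = c i + ((1+z)/2) * (1/2)^i"
      by (simp add: c_Suc_in[OF True] field_simps)
    have e2: "c (Suc i) = c i + 1 * (1/2)^i / 2"
      by (simp add: c_Suc_in[OF True] field_simps)
    have A1: "takagi (c (Suc i) + z * (1/2)^Suc i) = takagi (c i) + D i * ((1+z)/2) * (1/2)^i + ((1-z)/2 + takagi z / 2) * (1/2)^i"
      using Suc.IH[OF r] e1 tak_half2[OF Suc.prems] by simp
    have A2: "takagi (c (Suc i)) = takagi (c i) + D i * (1/2) * (1/2)^i + (1/2) * (1/2)^i"
      using Suc.IH[of "1/2"] tak_half2[of 0] e2 by (simp add: tak_zero)
    have "takagi (c (Suc i) + z * (1/2)^Suc i) = takagi (c i) + D i * ((1+z)/2) * (1/2)^i + ((1-z)/2 + takagi z / 2) * (1/2)^i" by (rule A1)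
    also have "\<dots> = takagi (c (Suc i)) + D (Suc i) * z * (1/2)^Suc i + takagi z * (1/2)^Suc i"
      unfolding A2 D_Suc_in[OF True] by (simp add: field_simps)
    finally show ?thesis .
  next
    case False
    have r: "0 \<le> z/2" "z/2 \<le> 1" using Suc.prems by auto
    have e1: "c (Suc i) + z * (1/2)^Suc i = c i + (z/2) * (1/2)^i"
      by (simp add: c_Suc_out[OF False] field_simps)
    have A1: "takagi (c (Suc i) + z * (1/2)^Suc i) = takagi (c i) + D i * (z/2) * (1/2)^i + (z/2 + takagi z / 2) * (1/2)^i"
      using Suc.IH[OF r] e1 tak_half[OF Suc.prems] by simp
    have "takagi (c (Suc i) + z * (1/2)^Suc i) = takagi (c i) + D i * (z/2) * (1/2)^i + (z/2 + takagi z / 2) * (1/2)^i" by (rule A1)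
    also have "\<dots> = takagi (c (Suc i)) + D (Suc i) * z * (1/2)^Suc i + takagi z * (1/2)^Suc i"
      unfolding c_Suc_out[OF False] D_Suc_out[OF False] by (simp add: field_simps)
    finally show ?thesis .
  qed
qed

end


lemma ln2_ge_half: "1/2 \<le> ln (2::real)"
proof -
  have "ln (1/2::real) \<le> 1/2 - 1" by (rule ln_le_minus_one) simp
  thus ?thesis by (simp add: ln_div)
qed

lemma log2_le_self: "1 \<le> G \<Longrightarrow> log 2 (real G) \<le> real G"
proof -
  assume G: "1 \<le> G"
  have "real G < 2 ^ G" using less_exp[of G] by (metis of_nat_less_iff of_nat_numeral of_nat_power)
  hence "log 2 (real G) < log 2 (2 ^ G)" using G by (intro log_less) auto
  thus ?thesis by (simp add: log_nat_power)
qed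

lemma log2_le_pred: "1 \<le> G \<Longrightarrow> log 2 (real G) \<le> real G - 1"
proof -
  assume G: "1 \<le> G"
  obtain m where m: "G = Suc m" using G by (cases G) auto
  have "Suc m \<le> 2 ^ m" by (induction m) auto
  hence "G \<le> 2 ^ (G - 1)" using m by simp
  hence "real G \<le> 2 ^ (G - 1)" by (metis of_nat_le_iff of_nat_numeral of_nat_power)
  hence "log 2 (real G) \<le> log 2 (2 ^ (G - 1))" using G by (intro log_mono) auto
  thus ?thesis using G by (simp add: log_nat_power)
qed

lemma T_pow: "takagi ((1/2)^j) = real j * (1/2)^j"
  using tak_scale[of 1 j] by (simp add: tak_one)

lemma T_up:
  assumes "0 < s" "s \<le> 1"
  shows "takagi s \<le> s * (log 2 (1/s) + 2)"
proof -
  obtain n where n: "(1/2::real)^n < s" using real_arch_pow_inv[OF assms(1), of "1/2"] by auto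
  have "(1/2::real)^(Suc n) \<le> (1/2)^n" by simp
  hence ex: "(1/2::real)^(Suc n) < s" using n by linarith
  define j where "j = (LEAST j. (1/2::real)^(Suc j) < s)"
  have j1: "(1/2::real)^(Suc j) < s" unfolding j_def by (rule LeastI[of "\<lambda>j. (1/2::real)^(Suc j) < s", OF ex])
  have j2: "s \<le> (1/2)^j"
  proof (cases j)
    case 0 then show ?thesis using assms by simp
  next
    case (Suc j')
    have "\<not> (1/2::real)^(Suc j') < s" using not_less_Least[of j' "\<lambda>j. (1/2::real)^(Suc j) < s"] Suc j_def by simp
    thus ?thesis using Suc by simp
  qed
  define z where "z = s * 2^j"
  have zs: "s = z * (1/2)^j" by (simp add: z_def power_divide)
  have z0: "0 \<le> z" "z \<le> 1" using j2 assms by (auto simp: z_def power_divide field_simps)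
  have "takagi s = real j * z * (1/2)^j + takagi z * (1/2)^j" using tak_scale[OF z0] zs by simp
  also have "\<dots> \<le> real j * s + (1/2)^j"
  proof -
    have "takagi z * (1/2)^j \<le> 1 * (1/2::real)^j" using tak_bounds[OF z0] by (intro mult_right_mono) auto
    thus ?thesis using zs by simp
  qed
  also have "\<dots> \<le> real j * s + 2 * s" using j1 by simp
  finally have A: "takagi s \<le> (real j + 2) * s" by (simp add: algebra_simps)
  have "2 ^ j \<le> 1/s" using j2 assms by (simp add: power_divide field_simps)
  hence "2 powr (real j) \<le> 1/s" by (simp add: powr_realpow)
  hence "real j \<le> log 2 (1/s)" using assms by (subst le_log_iff) auto
  hence "(real j + 2) * s \<le> (log 2 (1/s) + 2) * s" using assms by (intro mult_right_mono) auto
  thus ?thesis using A by (simp add: mult.commute)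
qed

lemma T_sigma:
  assumes G: "1 \<le> G" and s1: "(1/2)^G \<le> \<sigma>" and s2: "\<sigma> \<le> 2 * (1/2::real)^G"
  shows "(real G - 1) * \<sigma> \<le> takagi \<sigma> \<and> takagi \<sigma> \<le> (real G + 1) * \<sigma>"
proof -
  define z where "z = \<sigma> * 2^(G-1)"
  have p: "(1/2::real)^(G-1) = 2 * (1/2)^G" using G by (cases G) auto
  have zs: "\<sigma> = z * (1/2)^(G-1)" by (simp add: z_def power_divide)
  have z0: "0 \<le> z" "z \<le> 1"
    using s1 s2 p zero_le_power[of "1/2::real" G] by (auto simp: z_def power_divide field_simps)
  have e: "takagi \<sigma> = real (G - 1) * \<sigma> + takagi z * (1/2)^(G-1)"
    using tak_scale[OF z0, of "G-1"] zs by simp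
  have r: "real (G - 1) = real G - 1" using G by simp
  have "0 \<le> takagi z * (1/2)^(G-1)" using tak_bounds[OF z0] by simp
  moreover have "takagi z * (1/2)^(G-1) \<le> 2 * \<sigma>"
  proof -
    have "takagi z * (1/2)^(G-1) \<le> 1 * (1/2::real)^(G-1)" using tak_bounds[OF z0] by (intro mult_right_mono) auto
    thus ?thesis using p s1 by linarith
  qed
  ultimately show ?thesis using e r by (simp add: algebra_simps)
qed


definition R :: "real \<Rightarrow> real \<Rightarrow> real" where
  "R \<sigma> s = (s - \<sigma> + takagi \<sigma> - takagi s) / (\<sigma> + s)"

lemma RA_low:
  assumes "0 < \<sigma>" "\<sigma> \<le> 1" "0 < s" "s \<le> 1"
  shows "- (log 2 (1/s) + 1) \<le> R \<sigma> s"
proof -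
  let ?l = "log 2 (1/s)"
  have l0: "0 \<le> ?l" using assms by simp
  have Ts: "takagi s \<le> s * (?l + 2)" by (rule T_up) (use assms in auto)
  have Tsig: "0 \<le> takagi \<sigma>" using tak_bounds assms by auto
  have "- (?l + 1) * (\<sigma> + s) \<le> s - \<sigma> + takagi \<sigma> - takagi s"
  proof -
    have e1: "- (?l + 1) * (\<sigma> + s) = - (?l * \<sigma>) - \<sigma> - ?l * s - s" by (simp add: algebra_simps)
    have e2: "s * (?l + 2) = ?l * s + 2 * s" by (simp add: algebra_simps)
    have e3: "0 \<le> ?l * \<sigma>" using l0 assms by simp
    show ?thesis unfolding e1 using e2 e3 Ts Tsig by (smt (verit))
  qed
  thus ?thesis unfolding R_def using assms by (simp add: pos_le_divide_eq)
qed

lemma RB_low: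
  assumes G: "1 \<le> G" and s1: "(1/2)^G \<le> \<sigma>" and s2: "\<sigma> \<le> 2 * (1/2::real)^G"
    and "0 < s" "s \<le> 1"
  shows "- real G + log 2 (real G) - 2 \<le> R \<sigma> s"
proof -
  have "(0::real) < (1/2)^G" by simp
  hence sp: "0 < \<sigma>" using s1 by linarith
  have Gp: "0 < real G" using G by simp
  have Tsig: "(real G - 1) * \<sigma> \<le> takagi \<sigma>" using T_sigma[OF G s1 s2] by simp
  let ?l = "log 2 (1/s)"
  have Ts: "takagi s \<le> s * (?l + 2)" by (rule T_up) (use assms in auto)
  define w where "w = 2 * s / (real G * \<sigma>)"
  have w0: "0 < w" using assms sp Gp by (simp add: w_def)
  have lw: "- ln w \<le> 1/w - 1" using ln_le_minus_one[of "1/w"] w0 by (simp add: ln_div)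
  have sw: "s = w * (real G * \<sigma> / 2)" using sp Gp by (simp add: w_def)
  have p1: "0 < real G * \<sigma>" using Gp sp by simp
  have "ln s = ln (w * (real G * \<sigma> / 2))" by (rule arg_cong[OF sw])
  also have "\<dots> = ln w + ln (real G * \<sigma> / 2)" using w0 p1 by (intro ln_mult_pos) auto
  also have "ln (real G * \<sigma> / 2) = ln (real G * \<sigma>) - ln 2" using p1 by (intro ln_divide_pos) auto
  also have "ln (real G * \<sigma>) = ln (real G) + ln \<sigma>" using Gp sp by (intro ln_mult_pos) auto
  finally have lns: "ln s = ln w + ln (real G) + ln \<sigma> - ln 2" by simp
  have lsig: "- real G * ln 2 \<le> ln \<sigma>"
  proof -
    have "ln ((1/2)^G) \<le> ln \<sigma>" using s1 sp by (subst ln_le_cancel_iff) auto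
    thus ?thesis by (simp add: ln_realpow ln_div)
  qed
  have "ln (1/s) \<le> 1/w - 1 - ln (real G) + real G * ln 2 + ln 2"
    using lw lns lsig assms by (simp add: ln_div)
  hence "s * ln (1/s) \<le> s * (1/w - 1 - ln (real G) + real G * ln 2 + ln 2)"
    using assms by (simp add: mult_left_mono)
  also have "\<dots> = real G * \<sigma> / 2 - s - s * ln (real G) + s * (real G + 1) * ln 2"
    using w0 sp Gp assms by (simp add: w_def field_simps)
  finally have k: "s * ln (1/s) \<le> real G * \<sigma> / 2 - s - s * ln (real G) + s * (real G + 1) * ln 2" .
  have ln2: "1/2 \<le> ln (2::real)" by (rule ln2_ge_half)
  have l2p: "0 < ln (2::real)" by simp
  have "s * ?l = s * ln (1/s) / ln 2" by (simp add: log_def)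
  also have "\<dots> \<le> (real G * \<sigma> / 2 - s - s * ln (real G) + s * (real G + 1) * ln 2) / ln 2"
    using k l2p by (simp add: divide_right_mono)
  also have "\<dots> = real G * \<sigma> / (2 * ln 2) - s / ln 2 - s * log 2 (real G) + s * (real G + 1)"
    using l2p by (simp add: log_def field_simps)
  also have "\<dots> \<le> real G * \<sigma> - s * log 2 (real G) + s * (real G + 1)"
  proof -
    have "real G * \<sigma> / (2 * ln 2) \<le> real G * \<sigma>"
      using ln2 sp Gp by (simp add: field_simps)
    moreover have "0 \<le> s / ln 2" using assms by simp
    ultimately show ?thesis by linarith
  qed
  finally have key: "s * ?l \<le> real G * \<sigma> - s * log 2 (real G) + s * (real G + 1)" .
  have lg: "log 2 (real G) \<le> real G" by (rule log2_le_self[OF G])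
  have "(- real G + log 2 (real G) - 2) * (\<sigma> + s) \<le> s - \<sigma> + takagi \<sigma> - takagi s"
  proof -
    have "(- real G + log 2 (real G) - 2) * (\<sigma> + s) = (- real G + log 2 (real G) - 2) * \<sigma> + (- real G + log 2 (real G) - 2) * s"
      by (simp add: algebra_simps)
    moreover have "log 2 (real G) * \<sigma> \<le> real G * \<sigma>" using lg sp by simp
    ultimately show ?thesis using Tsig Ts key by (simp add: algebra_simps)
  qed
  thus ?thesis unfolding R_def using assms sp by (simp add: pos_le_divide_eq)
qed

lemma R_up:
  assumes G: "1 \<le> G" and s1: "(1/2)^G \<le> \<sigma>" and s2: "\<sigma> \<le> 2 * (1/2::real)^G"
    and j: "j \<le> G" and q: "real G \<le> 2 ^ (G - j)"
  shows "R \<sigma> ((1/2)^j) \<le> 5 - real j"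
proof -
  let ?s = "(1/2::real)^j"
  have "(0::real) < (1/2)^G" by simp
  hence sp: "0 < \<sigma>" using s1 by linarith
  have Gp: "0 < real G" using G by simp
  have ssp: "0 < ?s" by simp
  have Tsig: "takagi \<sigma> \<le> (real G + 1) * \<sigma>" using T_sigma[OF G s1 s2] by simp
  have Ts: "takagi ?s = real j * ?s" by (rule T_pow)
  have num: "?s - \<sigma> + takagi \<sigma> - takagi ?s \<le> - (real j - 1) * (\<sigma> + ?s) + (real G + real j - 1) * \<sigma>"
    using Tsig Ts by (simp add: algebra_simps)
  have rat: "\<sigma> / ?s \<le> 2 / real G"
  proof -
    have e: "(2::real) ^ G = 2 ^ (G - j) * 2 ^ j" using j by (simp add: power_add[symmetric])
    have "\<sigma> / ?s = \<sigma> * 2 ^ j" by (simp add: power_divide)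
    also have "\<dots> \<le> 2 * (1/2)^G * 2 ^ j" using s2 by simp
    also have "\<dots> = 2 / 2 ^ (G - j)" using e by (simp add: power_divide field_simps)
    also have "\<dots> \<le> 2 / real G" using q Gp by (simp add: frac_le)
    finally show ?thesis .
  qed
  have c0: "0 \<le> real G + real j - 1" using G by simp
  have "\<sigma> / (\<sigma> + ?s) \<le> \<sigma> / ?s" using sp ssp by (simp add: frac_le)
  hence r2: "\<sigma> / (\<sigma> + ?s) \<le> 2 / real G" using rat by simp
  have "(real G + real j - 1) * (\<sigma> / (\<sigma> + ?s)) \<le> (real G + real j - 1) * (2 / real G)"
    by (rule mult_left_mono[OF r2 c0])
  also have "\<dots> \<le> 4" using j Gp by (simp add: field_simps)
  finally have b: "(real G + real j - 1) * (\<sigma> / (\<sigma> + ?s)) \<le> 4" .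
  have "R \<sigma> ?s \<le> (- (real j - 1) * (\<sigma> + ?s) + (real G + real j - 1) * \<sigma>) / (\<sigma> + ?s)"
    unfolding R_def using num sp ssp by (simp add: divide_right_mono)
  also have "\<dots> = - (real j - 1) + (real G + real j - 1) * (\<sigma> / (\<sigma> + ?s))"
  proof -
    have gen: "d \<noteq> 0 \<Longrightarrow> (A * d + B * t) / d = A + B * (t / d)" for A B d t :: real
      by (simp add: field_simps)
    have "\<sigma> + ?s \<noteq> 0" using sp ssp by linarith
    thus ?thesis by (rule gen)
  qed
  finally show ?thesis using b by simp
qed


lemma swap_quot: "(a - b) / (c - d) = (b - a) / (d - (c::real))"
  by (metis minus_diff_eq minus_divide_divide)

context tak begin

lemma Qform:
  assumes "0 \<le> \<sigma>" "\<sigma> \<le> 1" "0 \<le> s" "s \<le> 1" "0 < \<sigma> + s"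
  shows "(takagi (c l + ((1+\<sigma>)/2) * (1/2)^l) - takagi (c l + ((1-s)/2) * (1/2)^l))
          / ((c l + ((1+\<sigma>)/2) * (1/2)^l) - (c l + ((1-s)/2) * (1/2)^l)) = D l + R \<sigma> s"
proof -
  let ?P = "(1/2::real)^l"
  have r1: "0 \<le> (1+\<sigma>)/2" "(1+\<sigma>)/2 \<le> 1" using assms by auto
  have r2: "0 \<le> (1-s)/2" "(1-s)/2 \<le> 1" using assms by auto
  have Tv: "takagi ((1+\<sigma>)/2) = (1-\<sigma>)/2 + takagi \<sigma> / 2" using tak_half2 assms by auto
  have Tu: "takagi ((1-s)/2) = (1-s)/2 + takagi s / 2"
    using tak_half[of "1-s"] tak_sym[of s] assms by auto
  have e1: "takagi (c l + ((1+\<sigma>)/2) * ?P) = takagi (c l) + D l * ((1+\<sigma>)/2) * ?P + takagi ((1+\<sigma>)/2) * ?P"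
    by (rule SA[OF r1])
  have e2: "takagi (c l + ((1-s)/2) * ?P) = takagi (c l) + D l * ((1-s)/2) * ?P + takagi ((1-s)/2) * ?P"
    by (rule SA[OF r2])
  have P0: "?P \<noteq> 0" by simp
  have s0: "\<sigma> + s \<noteq> 0" using assms(5) by simp
  have num: "takagi (c l) + D l * ((1+\<sigma>)/2) * ?P + ((1-\<sigma>)/2 + takagi \<sigma> / 2) * ?P
     - (takagi (c l) + D l * ((1-s)/2) * ?P + ((1-s)/2 + takagi s / 2) * ?P)
     = (((\<sigma>+s)/2) * D l + (s - \<sigma> + takagi \<sigma> - takagi s)/2) * ?P"
    by (simp add: field_simps)
  have den: "c l + ((1+\<sigma>)/2) * ?P - (c l + ((1-s)/2) * ?P) = ((\<sigma>+s)/2) * ?P"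
    by (simp add: field_simps)
  have aux: "P \<noteq> 0 \<Longrightarrow> u \<noteq> 0 \<Longrightarrow> ((u/2 * d + w/2) * P) / ((u/2) * P) = d + w / u" for P u d w :: real
    by (simp add: field_simps)
  show ?thesis unfolding e1 e2 Tv Tu num den R_def by (rule aux[OF P0 s0])
qed

lemma D_a_ge: "1 - E k \<le> D (a k)" if "E k = real (a (Suc k)) - 2 * real (a k) + 2 * (real k + 1) - log 2 (real (a (Suc k)) - real (a k))" for E
proof -
  have lt: "a k < a (Suc k)" using sm by (simp add: strict_mono_def)
  define G where "G = a (Suc k) - a k"
  have G1: "1 \<le> G" using lt by (simp add: G_def)
  have rg: "real (a (Suc k)) - real (a k) = real G" using lt by (simp add: G_def of_nat_diff)
  have "log 2 (real G) \<le> real G - 1" by (rule log2_le_pred[OF G1])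
  thus ?thesis using that rg by (simp add: D_a)
qed

lemma D_ge_a: "a k \<le> i \<Longrightarrow> \<exists>k'\<ge>k. D (a k') \<le> D i"
proof -
  assume h: "a k \<le> i"
  have kN: "k < N i" by (rule N3[OF h])
  define k' where "k' = N i - 1"
  have k'k: "k \<le> k'" using kN by (simp add: k'_def)
  have Nk: "N i = Suc k'" using kN by (simp add: k'_def)
  have "a k' \<le> i" using N2[of k' i] Nk by simp
  hence "D (a k') \<le> D i" using Nk by (simp add: D_def N_a)
  thus ?thesis using k'k by blast
qed

lemma run:
  assumes "Suc l \<notin> range a" "Suc l \<le> i"
  shows "(\<forall>i'. Suc (Suc l) \<le> i' \<and> i' \<le> i \<longrightarrow> i' \<in> range a) \<longrightarrow>
         c i = c l + (1/2)^(Suc l) - (1/2)^i \<and> D i = D l + real l + 2 - real i"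
  using assms(2)
proof (induction i rule: dec_induct)
  case base
  then show ?case using c_Suc_out[OF assms(1)] D_Suc_out[OF assms(1)] by simp
next
  case (step i)
  show ?case
  proof
    assume H: "\<forall>i'. Suc (Suc l) \<le> i' \<and> i' \<le> Suc i \<longrightarrow> i' \<in> range a"
    have IH: "c i = c l + (1/2)^(Suc l) - (1/2)^i \<and> D i = D l + real l + 2 - real i"
      using step.IH H by auto
    have inr: "Suc i \<in> range a" using H step.hyps by auto
    show "c (Suc i) = c l + (1/2)^(Suc l) - (1/2)^Suc i \<and> D (Suc i) = D l + real l + 2 - real (Suc i)"
      using IH c_Suc_in[OF inr] D_Suc_in[OF inr] by simp
  qed
qed

end


lemma p2: "(2::real)^k * (1/2)^k = 1"
  by (simp add: power_divide)

context tak begin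

definition Q :: "real \<Rightarrow> real" where "Q h = (takagi (x + h) - takagi x) / h"
definition E :: "nat \<Rightarrow> real" where
  "E k = real (a (Suc k)) - 2 * real (a k) + 2 * (real k + 1) - log 2 (real (a (Suc k)) - real (a k))"

lemma D_aE: "1 - E k \<le> D (a k)"
  by (rule D_a_ge) (simp add: E_def)

lemma sigma_facts:
  assumes l: "Suc l = a n"
  defines "\<sigma> \<equiv> (x - c (a n)) * 2 ^ (a n)"
  shows "(1/2)^(a (Suc n) - a n) \<le> \<sigma> \<and> \<sigma> \<le> 2 * (1/2)^(a (Suc n) - a n)
         \<and> x = c l + ((1+\<sigma>)/2) * (1/2)^l"
proof -
  have lt: "a n < a (Suc n)" using sm by (simp add: strict_mono_def)
  define G where "G = a (Suc n) - a n"
  have tb: "(1/2)^a (Suc n) \<le> x - c (a n) \<and> x - c (a n) \<le> 2 * (1/2)^a (Suc n)"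
    using tail_bounds[of "a n"] by (simp add: N_a)
  have pw: "(1/2::real)^a (Suc n) * 2^(a n) = (1/2)^G"
  proof -
    have "a (Suc n) = G + a n" using lt by (simp add: G_def)
    hence "(1/2::real)^a (Suc n) * 2^(a n) = (1/2)^G * ((2::real)^(a n) * (1/2)^(a n))"
      by (simp add: power_add)
    thus ?thesis by (simp add: p2)
  qed
  have pp: "(0::real) < 2^(a n)" by simp
  have b1: "(1/2)^G \<le> \<sigma>" unfolding \<sigma>_def using mult_right_mono[OF conjunct1[OF tb], of "2^(a n)"] pw by simp
  have m2: "(x - c (a n)) * 2^(a n) \<le> (2 * (1/2)^a (Suc n)) * 2^(a n)"
    by (rule mult_right_mono) (use tb in auto)
  have eq2: "(2 * (1/2::real)^a (Suc n)) * 2^(a n) = 2 * (1/2)^G"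
    by (subst mult.assoc, subst pw, rule refl)
  have b2: "\<sigma> \<le> 2 * (1/2)^G" unfolding \<sigma>_def using m2 eq2 by linarith
  have inr: "Suc l \<in> range a" using l by auto
  have cS: "c (a n) = c l + (1/2)^(a n)" using c_Suc_in[OF inr] l by simp
  have "\<sigma> * (1/2)^(a n) = x - c (a n)" unfolding \<sigma>_def using p2[of "a n"] by (simp add: algebra_simps)
  moreover have "((1+\<sigma>)/2) * (1/2::real)^l = (1/2)^(a n) + \<sigma> * (1/2)^(a n)"
    using l[symmetric] by (simp add: field_simps)
  ultimately have "x = c l + ((1+\<sigma>)/2) * (1/2)^l" using cS by linarith
  thus ?thesis using b1 b2 by (simp add: G_def)
qed

lemma D_pred: "Suc l = a n \<Longrightarrow> D l = real (a n) - 1 - 2 * real n"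
proof -
  assume l: "Suc l = a n"
  have "N l = n" using N_Suc_in[OF l] by simp
  thus ?thesis using l by (simp add: D_def)
qed

lemma E_G: "E n = real (a (Suc n) - a n) - real (a n) + 2 * real n + 2 - log 2 (real (a (Suc n) - a n))"
proof -
  have lt: "a n < a (Suc n)" using sm by (simp add: strict_mono_def)
  thus ?thesis unfolding E_def by (simp add: of_nat_diff less_imp_le[OF lt])
qed

lemma case_B:
  assumes l: "Suc l = a n" and yl: "c l \<le> y" "y < c l + (1/2)^(Suc l)"
  shows "- E n - 1 \<le> (takagi y - takagi x) / (y - x)"
proof -
  define \<sigma> where "\<sigma> = (x - c (a n)) * 2 ^ (a n)"
  define G where "G = a (Suc n) - a n"
  have lt: "a n < a (Suc n)" using sm by (simp add: strict_mono_def)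
  have G1: "1 \<le> G" using lt by (simp add: G_def)
  have sf: "(1/2)^G \<le> \<sigma> \<and> \<sigma> \<le> 2 * (1/2)^G \<and> x = c l + ((1+\<sigma>)/2) * (1/2)^l"
    using sigma_facts[OF l] unfolding \<sigma>_def G_def by simp
  have "(0::real) < (1/2)^G" by simp
  hence sp: "0 < \<sigma>" using sf by linarith
  have "(1/2::real)^G \<le> 1/2" using power_decreasing[OF G1, of "1/2::real"] by simp
  hence s1: "\<sigma> \<le> 1" using sf by linarith
  define s where "s = 1 - 2 * ((y - c l) * 2^l)"
  have "(y - c l) * 2^l < (1/2)^(Suc l) * 2^l" using yl by (intro mult_strict_right_mono) auto
  also have "\<dots> = 1/2" using p2[of l] by (simp add: algebra_simps)
  finally have ss: "0 < s" by (simp add: s_def)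
  have ss1: "s \<le> 1" using yl by (simp add: s_def)
  have "((1-s)/2) = (y - c l) * 2^l" by (simp add: s_def)
  hence "((1-s)/2) * (1/2)^l = (y - c l) * (2^l * (1/2)^l)" by (simp add: mult.assoc)
  hence "((1-s)/2) * (1/2)^l = y - c l" using p2[of l] by simp
  hence ye: "y = c l + ((1-s)/2) * (1/2)^l" by linarith
  have "(takagi x - takagi y) / (x - y) = D l + R \<sigma> s"
    using Qform[of \<sigma> s l] sp s1 ss ss1 sf ye by simp
  hence q: "(takagi y - takagi x) / (y - x) = D l + R \<sigma> s" by (simp add: swap_quot)
  have rb: "- real G + log 2 (real G) - 2 \<le> R \<sigma> s"
    by (rule RB_low[OF G1]) (use sf ss ss1 in auto)
  show ?thesis using q rb D_pred[OF l] E_G[of n] unfolding G_def by simp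
qed

end


context tak begin

lemma case_A:
  assumes nr: "Suc l \<notin> range a" and yl: "c l + (1/2)^(Suc l) < y" "y \<le> c l + (1/2)^l"
  shows "\<exists>q. Suc l \<le> q - 1 \<and> D (q - 1) - 3 \<le> (takagi y - takagi x) / (y - x)"
proof -
  have cS: "c (Suc l) = c l" by (rule c_Suc_out[OF nr])
  have xl: "x - c l < (1/2)^(Suc l)" using x_lt[of "Suc l"] cS by simp
  have ex: "\<exists>i. Suc (Suc l) \<le> i \<and> i \<notin> range a"
  proof (rule ccontr)
    assume "\<not> (\<exists>i. Suc (Suc l) \<le> i \<and> i \<notin> range a)"
    hence all: "\<forall>i. Suc (Suc l) \<le> i \<longrightarrow> i \<in> range a" by auto
    have pos: "0 < (1/2::real)^(Suc l) - (x - c l)" using xl by simp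
    obtain i0 where i0: "(1/2::real)^i0 < (1/2)^(Suc l) - (x - c l)"
      using real_arch_pow_inv[OF pos, of "1/2"] by auto
    define i where "i = max i0 (Suc l)"
    have "(1/2::real)^i \<le> (1/2)^i0" unfolding i_def by (intro power_decreasing) auto
    moreover have "c i = c l + (1/2)^(Suc l) - (1/2)^i"
      using run[OF nr, of i] all unfolding i_def by auto
    moreover have "0 < x - c i" by (rule x_pos)
    ultimately show False using i0 by linarith
  qed
  define q where "q = (LEAST i. Suc (Suc l) \<le> i \<and> i \<notin> range a)"
  have q1: "Suc (Suc l) \<le> q \<and> q \<notin> range a"
    unfolding q_def by (rule LeastI_ex[OF ex])
  have q2: "\<forall>i'. Suc (Suc l) \<le> i' \<and> i' \<le> q - 1 \<longrightarrow> i' \<in> range a"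
  proof (intro allI impI)
    fix i' assume h: "Suc (Suc l) \<le> i' \<and> i' \<le> q - 1"
    hence "i' < q" using q1 by auto
    thus "i' \<in> range a" using not_less_Least[of i' "\<lambda>i. Suc (Suc l) \<le> i \<and> i \<notin> range a"] h
      unfolding q_def by auto
  qed
  have ql: "Suc l \<le> q - 1" using q1 by auto
  have rq: "c (q-1) = c l + (1/2)^(Suc l) - (1/2)^(q-1) \<and> D (q-1) = D l + real l + 2 - real (q-1)"
    using run[OF nr ql] q2 by blast
  have qS: "Suc (q - 1) = q" using q1 by auto
  have cq: "c q = c (q - 1)" using c_Suc_out[of "q-1"] q1 qS by simp
  have xq: "x - c q < (1/2)^q" by (rule x_lt)
  have "(1/2::real)^(Suc (q-1)) = (1/2)^(q-1) / 2" by simp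
  hence ph: "(1/2::real)^(q-1) = 2 * (1/2)^q" unfolding qS by simp
  have xl2: "x - c l < (1/2)^(Suc l) - (1/2)^q" using rq cq xq ph by linarith
  define s where "s = 1 - 2 * ((x - c l) * 2^l)"
  define \<sigma> where "\<sigma> = 2 * ((y - c l) * 2^l) - 1"
  define k where "k = q - Suc l"
  have qk: "q = k + Suc l" using q1 by (simp add: k_def)
  have pk: "(2::real)^(Suc l) * (1/2)^q = (1/2)^k"
    using p2[of "Suc l"] unfolding qk by (simp add: power_add algebra_simps)
  have "2 * ((x - c l) * 2^l) = (x - c l) * 2^(Suc l)" by simp
  also have "\<dots> < ((1/2)^(Suc l) - (1/2)^q) * 2^(Suc l)"
    using xl2 by (intro mult_strict_right_mono) auto
  also have "\<dots> = 1 - (1/2)^k" using p2[of "Suc l"] pk by (simp add: algebra_simps)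
  finally have sk: "(1/2)^k < s" unfolding s_def by linarith
  have "(0::real) < (1/2)^k" by simp
  hence s0: "0 < s" using sk by linarith
  have s1: "s \<le> 1" using x_pos[of l] by (simp add: s_def)
  have "(1/2)^(Suc l) * 2^l < (y - c l) * 2^l" using yl by (intro mult_strict_right_mono) auto
  hence sg0: "0 < \<sigma>" using p2[of l] by (simp add: \<sigma>_def algebra_simps)
  have "(y - c l) * 2^l \<le> (1/2)^l * 2^l" using yl by (intro mult_right_mono) auto
  hence sg1: "\<sigma> \<le> 1" using p2[of l] by (simp add: \<sigma>_def algebra_simps)
  have "((1-s)/2) = (x - c l) * 2^l" by (simp add: s_def)
  hence "((1-s)/2) * (1/2)^l = (x - c l) * (2^l * (1/2)^l)" by (simp add: mult.assoc)
  hence "((1-s)/2) * (1/2)^l = x - c l" using p2[of l] by simp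
  hence xe: "x = c l + ((1-s)/2) * (1/2)^l" by linarith
  have "((1+\<sigma>)/2) = (y - c l) * 2^l" by (simp add: \<sigma>_def)
  hence "((1+\<sigma>)/2) * (1/2)^l = (y - c l) * (2^l * (1/2)^l)" by (simp add: mult.assoc)
  hence "((1+\<sigma>)/2) * (1/2)^l = y - c l" using p2[of l] by simp
  hence ye: "y = c l + ((1+\<sigma>)/2) * (1/2)^l" by linarith
  have qf: "(takagi y - takagi x) / (y - x) = D l + R \<sigma> s"
    using Qform[of \<sigma> s l] sg0 sg1 s0 s1 xe ye by simp
  have ra: "- (log 2 (1/s) + 1) \<le> R \<sigma> s" by (rule RA_low) (use sg0 sg1 s0 s1 in auto)
  have "1/s < 2^k"
  proof -
    have "1/s < 1/(1/2)^k" using sk s0 by (intro divide_strict_left_mono) auto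
    thus ?thesis by (simp add: power_divide)
  qed
  hence "log 2 (1/s) < log 2 (2^k)" using s0 by (intro log_less) auto
  hence lk: "log 2 (1/s) < real k" by (simp add: log_nat_power)
  have rk: "real k = real q - real l - 1" using qk by simp
  have rq1: "real (q - 1) = real q - 1" using q1 by (simp add: of_nat_diff)
  have "D (q - 1) - 3 \<le> (takagi y - takagi x) / (y - x)"
    using qf ra lk rk rq rq1 by linarith
  thus ?thesis using ql by blast
qed

end


context tak begin

lemma dir2:
  assumes "filterlim E at_bot sequentially"
  shows "filterlim Q at_top (at 0)"
  unfolding filterlim_at_top
proof
  fix Z :: real
  have "eventually (\<lambda>k. E k \<le> - Z - 5) sequentially" using assms by (simp add: filterlim_at_bot)
  then obtain K where K: "\<And>k. K \<le> k \<Longrightarrow> E k \<le> - Z - 5" by (auto simp: eventually_sequentially)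
  have hD: "Z + 6 \<le> D i" if aKi: "a K \<le> i" for i
  proof -
    obtain k' where "K \<le> k'" "D (a k') \<le> D i" using D_ge_a[OF aKi] by blast
    thus ?thesis using D_aE[of k'] K[of k'] by linarith
  qed
  define L where "L = Suc (a K)"
  define \<delta> where "\<delta> = min (x - c L) (c L + (1/2)^L - x)"
  have \<delta>0: "0 < \<delta>" using x_pos[of L] x_lt[of L] by (simp add: \<delta>_def)
  have main: "Z \<le> Q h" if h0: "h \<noteq> 0" and hd: "\<bar>h\<bar> < \<delta>" for h
  proof -
    define y where "y = x + h"
    define S where "S n \<longleftrightarrow> c n \<le> y \<and> y \<le> c n + (1/2)^n" for n
    have SL: "S L" using hd by (auto simp: \<delta>_def y_def S_def abs_less_iff)
    have ex: "\<exists>n. L \<le> n \<and> \<not> S n"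
    proof -
      have hp: "0 < \<bar>h\<bar>" using h0 by simp
      obtain n0 where n0: "(1/2::real)^n0 < \<bar>h\<bar>" using real_arch_pow_inv[OF hp, of "1/2"] by auto
      define n where "n = max n0 L"
      have "\<not> S n"
      proof
        assume Sn: "S n"
        have "\<bar>h\<bar> < (1/2)^n" using Sn x_pos[of n] x_lt[of n] by (auto simp: y_def S_def abs_less_iff)
        moreover have "(1/2::real)^n \<le> (1/2)^n0" unfolding n_def by (intro power_decreasing) auto
        ultimately show False using n0 by linarith
      qed
      moreover have "L \<le> n" by (simp add: n_def)
      ultimately show ?thesis by blast
    qed
    define m where "m = (LEAST n. L \<le> n \<and> \<not> S n)"
    have m1: "L \<le> m \<and> \<not> S m" unfolding m_def by (rule LeastI_ex[OF ex])
    have mL: "m \<noteq> L" using m1 SL by auto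
    then obtain l where ml: "m = Suc l" and Ll: "L \<le> l" using m1 by (cases m) auto
    have Sl: "S l"
    proof (rule ccontr)
      assume "\<not> S l"
      hence "m \<le> l" unfolding m_def using Ll by (intro Least_le) auto
      thus False using ml by simp
    qed
    have Qh: "Q h = (takagi y - takagi x) / (y - x)" by (simp add: Q_def y_def)
    have aKl: "a K < l" using Ll by (simp add: L_def)
    have hh: "(1/2::real)^(Suc l) + (1/2)^(Suc l) = (1/2)^l" by simp
    show ?thesis
    proof (cases "Suc l \<in> range a")
      case True
      then obtain n where n: "Suc l = a n" by auto
      have cS: "c (Suc l) = c l + (1/2)^(Suc l)" by (rule c_Suc_in[OF True])
      have yl: "y < c l + (1/2)^(Suc l)"
      proof (rule ccontr)
        assume "\<not> y < c l + (1/2)^(Suc l)"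
        hence "S (Suc l)" using Sl cS hh by (auto simp: S_def)
        thus False using m1 ml by auto
      qed
      have "- E n - 1 \<le> (takagi y - takagi x) / (y - x)" by (rule case_B[OF n]) (use Sl yl in \<open>auto simp: S_def\<close>)
      moreover have "a K < a n" using aKl n by simp
      hence "K < n" using sm by (simp add: strict_mono_less)
      hence "E n \<le> - Z - 5" using K by simp
      ultimately show ?thesis using Qh by linarith
    next
      case False
      have cS: "c (Suc l) = c l" by (rule c_Suc_out[OF False])
      have yl: "c l + (1/2)^(Suc l) < y"
      proof (rule ccontr)
        assume "\<not> c l + (1/2)^(Suc l) < y"
        hence "S (Suc l)" using Sl cS by (auto simp: S_def)
        thus False using m1 ml by auto
      qed
      have yl2: "y \<le> c l + (1/2)^l" using Sl by (simp add: S_def)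
      obtain q where q: "Suc l \<le> q - 1" "D (q - 1) - 3 \<le> (takagi y - takagi x) / (y - x)"
        using case_A[OF False yl yl2] by auto
      have "a K \<le> q - 1" using aKl q(1) by simp
      hence "Z + 6 \<le> D (q - 1)" by (rule hD)
      thus ?thesis using q(2) Qh by linarith
    qed
  qed
  show "eventually (\<lambda>h. Z \<le> Q h) (at 0)"
    unfolding eventually_at using \<delta>0 main by (auto intro!: exI[of _ \<delta>] simp: dist_real_def)
qed

lemma dir1:
  assumes lim: "filterlim Q at_top (at 0)"
  shows "filterlim E at_bot sequentially"
proof -
  define hs where "hs n = (c (a n - 1) + ((1 - (1/2::real)^(a (Suc n) - a n - nat \<lceil>log 2 (real (a (Suc n) - a n))\<rceil>))/2) * (1/2)^(a n - 1)) - x" for n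
  have key: "hs n \<noteq> 0 \<and> \<bar>hs n\<bar> \<le> 2 * (1/2)^n \<and> Q (hs n) \<le> 7 - E n" for n
  proof -
    define G where "G = a (Suc n) - a n"
    define qq where "qq = nat \<lceil>log 2 (real G)\<rceil>"
    define j where "j = G - qq"
    define l where "l = a n - 1"
    have lt: "a n < a (Suc n)" using sm by (simp add: strict_mono_def)
    have G1: "1 \<le> G" using lt by (simp add: G_def)
    have l: "Suc l = a n" using a1 by (simp add: l_def Suc_le_eq)
    have lg0: "0 \<le> log 2 (real G)" using G1 by simp
    have rq: "real qq = of_int \<lceil>log 2 (real G)\<rceil>" using lg0 by (simp add: qq_def)
    have q1: "log 2 (real G) \<le> real qq" using rq by simp
    have q2: "real qq < log 2 (real G) + 1" using rq ceiling_correct[of "log 2 (real G)"] by linarith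
    have qG: "qq \<le> G"
    proof -
      have "\<lceil>log 2 (real G)\<rceil> \<le> int G" using log2_le_self[OF G1] by (intro ceiling_le) simp
      thus ?thesis using log2_le_self[OF G1] by (simp add: qq_def)
    qed
    have Gq: "real G \<le> 2 ^ qq"
    proof -
      have "real G = 2 powr (log 2 (real G))" using G1 by simp
      also have "\<dots> \<le> 2 powr (real qq)" using q1 by (intro powr_mono) auto
      also have "\<dots> = 2 ^ qq" by (simp add: powr_realpow)
      finally show ?thesis .
    qed
    have jG: "j \<le> G" by (simp add: j_def)
    have Gj: "G - j = qq" using qG by (simp add: j_def)
    define \<sigma> where "\<sigma> = (x - c (a n)) * 2 ^ (a n)"
    have sf: "(1/2)^G \<le> \<sigma> \<and> \<sigma> \<le> 2 * (1/2)^G \<and> x = c l + ((1+\<sigma>)/2) * (1/2)^l"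
      using sigma_facts[OF l] unfolding \<sigma>_def G_def by simp
    have "(0::real) < (1/2)^G" by simp
    hence sg0: "0 < \<sigma>" using sf by linarith
    have "(1/2::real)^G \<le> 1/2" using power_decreasing[OF G1, of "1/2::real"] by simp
    hence sg1: "\<sigma> \<le> 1" using sf by linarith
    define s where "s = (1/2::real)^j"
    have s0: "0 < s" by (simp add: s_def)
    have s1: "s \<le> 1" by (simp add: s_def power_le_one)
    define y where "y = c l + ((1-s)/2) * (1/2)^l"
    have hy: "hs n = y - x" by (simp add: hs_def y_def s_def j_def qq_def G_def l_def)
    have "(takagi x - takagi y) / (x - y) = D l + R \<sigma> s"
      using Qform[of \<sigma> s l] sg0 sg1 s0 s1 sf y_def by simp
    hence qf: "Q (hs n) = D l + R \<sigma> s" using hy by (simp add: Q_def swap_quot)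
    have ru: "R \<sigma> s \<le> 5 - real j" unfolding s_def
      by (rule R_up[OF G1]) (use sf jG Gj Gq in auto)
    have rj: "real j = real G - real qq" using qG by (simp add: j_def of_nat_diff)
    have Qb: "Q (hs n) \<le> 7 - E n"
      using qf ru D_pred[OF l] E_G[of n] rj q2 unfolding G_def by linarith
    have xe: "x = c l + ((1+\<sigma>)/2) * (1/2)^l" using sf by blast
    have "y - x = ((1-s)/2) * (1/2)^l - ((1+\<sigma>)/2) * (1/2)^l" using xe y_def by linarith
    also have "\<dots> = - (((\<sigma> + s)/2) * (1/2)^l)" by (simp add: field_simps)
    finally have hv: "y - x = - (((\<sigma> + s)/2) * (1/2)^l)" .
    have hn: "hs n \<noteq> 0" using hy hv sg0 s0 by simp
    have b1: "((\<sigma> + s)/2) * (1/2::real)^l \<le> 1 * (1/2)^l" using sg1 s1 by (intro mult_right_mono) auto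
    have b2: "(1/2::real)^l = 2 * (1/2)^(a n)" using l[symmetric] by simp
    have b3: "(1/2::real)^(a n) \<le> (1/2)^n" using a_ge[of n] by (intro power_decreasing) auto
    have b4: "\<bar>hs n\<bar> = ((\<sigma> + s)/2) * (1/2)^l"
    proof -
      have "0 \<le> ((\<sigma> + s)/2) * (1/2::real)^l" using sg0 s0 by simp
      thus ?thesis using hy hv by simp
    qed
    have "\<bar>hs n\<bar> \<le> 2 * (1/2)^n" using b1 b2 b3 b4 by linarith
    thus ?thesis using hn Qb by simp
  qed
  have t0: "hs \<longlonglongrightarrow> 0"
  proof (rule Lim_null_comparison)
    show "eventually (\<lambda>n. norm (hs n) \<le> 2 * (1/2::real)^n) sequentially" using key by simp
    show "(\<lambda>n. 2 * (1/2::real)^n) \<longlonglongrightarrow> 0" by (intro tendsto_mult_right_zero LIMSEQ_realpow_zero) auto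
  qed
  have hl: "filterlim hs (at 0) sequentially" by (rule filterlim_atI[OF t0]) (use key in simp)
  have QE: "filterlim (\<lambda>n. Q (hs n)) at_top sequentially" by (rule filterlim_compose[OF lim hl])
  show ?thesis unfolding filterlim_at_bot
  proof
    fix Z :: real
    have "eventually (\<lambda>n. 7 - Z \<le> Q (hs n)) sequentially" using QE by (simp add: filterlim_at_top)
    thus "eventually (\<lambda>n. E n \<le> Z) sequentially"
    proof (rule eventually_mono)
      fix n assume "7 - Z \<le> Q (hs n)"
      thus "E n \<le> Z" using key[of n] by linarith
    qed
  qed
qed

theorem main: "filterlim Q at_top (at 0) \<longleftrightarrow> filterlim E at_bot sequentially"
  using dir1 dir2 by blast

end


lemma filterlim_at0_mirror: "filterlim (\<lambda>h. f (- h)) F (at (0::real)) \<longleftrightarrow> filterlim f F (at 0)"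
proof -
  have "filtermap (\<lambda>h. f (- h)) (at (0::real)) = filtermap f (filtermap uminus (at 0))"
    by (simp add: filtermap_filtermap)
  also have "filtermap uminus (at (0::real)) = at 0" using filtermap_at_minus[of "0::real"] by simp
  finally show ?thesis unfolding filterlim_def by simp
qed

theorem corollary1:
  fixes x :: real and a b :: "nat \<Rightarrow> nat"
  assumes "0 < x" "x < 1" "\<not> dyadic x"
    and "strict_mono a" "\<forall>k. a k \<ge> 1" "(\<lambda>k. (1/2) ^ a k) sums x"
    and "strict_mono b" "\<forall>k. b k \<ge> 1" "(\<lambda>k. (1/2) ^ b k) sums (1 - x)"
  shows "(filterlim (\<lambda>h. (takagi (x + h) - takagi x) / h) at_top (at 0) \<longleftrightarrow>
            filterlim (\<lambda>k. real (a (Suc k)) - 2 * real (a k) + 2 * (real k + 1)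
                            - log 2 (real (a (Suc k)) - real (a k))) at_bot sequentially)
       \<and> (filterlim (\<lambda>h. (takagi (x + h) - takagi x) / h) at_bot (at 0) \<longleftrightarrow>
            filterlim (\<lambda>k. real (b (Suc k)) - 2 * real (b k) + 2 * (real k + 1)
                            - log 2 (real (b (Suc k)) - real (b k))) at_bot sequentially)"
proof -
  interpret A: tak x a using assms(1-6) by unfold_locales auto
  have nd2: "\<not> dyadic (1 - x)"
  proof
    assume "dyadic (1 - x)"
    then obtain k :: int and m :: nat where km: "1 - x = real_of_int k / 2 ^ m" by (auto simp: dyadic_def)
    hence "x = real_of_int (2 ^ m - k) / 2 ^ m" by (simp add: field_simps)
    thus False using assms(3) unfolding dyadic_def by blast
  qed
  interpret B: tak "1 - x" b using assms(1,2,7-9) nd2 by unfold_locales auto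
  have i: "filterlim (\<lambda>h. (takagi (x + h) - takagi x) / h) at_top (at 0) \<longleftrightarrow>
            filterlim (\<lambda>k. real (a (Suc k)) - 2 * real (a k) + 2 * (real k + 1)
                            - log 2 (real (a (Suc k)) - real (a k))) at_bot sequentially"
    using A.main unfolding A.Q_def[abs_def] A.E_def[abs_def] .
  have ii0: "filterlim B.Q at_top (at 0) \<longleftrightarrow>
            filterlim (\<lambda>k. real (b (Suc k)) - 2 * real (b k) + 2 * (real k + 1)
                            - log 2 (real (b (Suc k)) - real (b k))) at_bot sequentially"
    using B.main unfolding B.E_def[abs_def] .
  have eq: "(\<lambda>h. (takagi (x + h) - takagi x) / h) = (\<lambda>h. - B.Q (- h))"
  proof
    fix h :: real
    have "takagi (1 - x + - h) = takagi (x + h)" using tak_sym[of "x + h"] by (simp add: algebra_simps)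
    moreover have "takagi (1 - x) = takagi x" by (rule tak_sym)
    ultimately show "(takagi (x + h) - takagi x) / h = - B.Q (- h)"
      unfolding B.Q_def by (simp add: divide_minus_right)
  qed
  have "filterlim (\<lambda>h. (takagi (x + h) - takagi x) / h) at_bot (at 0) \<longleftrightarrow>
        filterlim (\<lambda>h. B.Q (- h)) at_top (at 0)"
    unfolding eq using filterlim_uminus_at_top[of "\<lambda>h. B.Q (- h)" "at 0"] by simp
  also have "\<dots> \<longleftrightarrow> filterlim B.Q at_top (at 0)" by (rule filterlim_at0_mirror)
  finally show ?thesis using i ii0 by blast
qed


end
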